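(* Let $\Gamma$ be a maximal consistent set of SBTrust and let $\delta,\psi$ be propositional formulas. Then $\delta\rightsquigarrow\psi\in\Gamma$ if and only if $\psi\in\Delta$ for every $(\Delta,\varphi,i)\in\mathit{max}([\delta]_\Gamma)$.
   Context: $\mathcal{L}_T$: $\alpha::=\varphi\mid\varphi\rightsquigarrow\varphi\mid B(\alpha)\mid\alpha*\alpha\mid\neg\alpha$, with $\varphi$ ranging over classical propositional formulas (set $\mathcal{L}_{CL}$) and $*\in\{\land,\lor,\to,\leftrightarrow\}$. SBTrust is the Hilbert system ($\varphi,\psi,\chi,\varphi_i,\psi_i$ propositional; $\alpha,\beta\in\mathcal{L}_T$; rule outputs in $\mathcal{L}_T$): classical tautologies and Modus Ponens; $\varphi\rightsquigarrow\varphi$; $(\varphi\rightsquigarrow\bot)\to\neg\varphi$; $((\psi\land\chi)\rightsquigarrow\varphi)\to(\psi\rightsquigarrow(\chi\to\varphi))$; $(\neg(\varphi\leftrightarrow\psi)\rightsquigarrow\bot)\to((\varphi\rightsquigarrow\chi)\leftrightarrow(\psi\rightsquigarrow\chi))$; rule RCK: from $(\varphi_1\land\dots\land\varphi_n)\to\varphi_{n+1}$ infer $\bigwedge_{j\le n}(\psi\rightsquigarrow\varphi_j)\to(\psi\rightsquigarrow\varphi_{n+1})$; rule $\mathbf{S5_F}$: from $(\ell_1\land\dots\land\ell_n)\to\chi$ infer $(\ell_1\land\dots\land\ell_n)\to(\neg\chi\rightsquigarrow\bot)$, each $\ell_j$ being $\varphi_j\rightsquigarrow\psi_j$ or its negation,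 $\chi$ propositional; $B(\alpha\to\beta)\to(B\alpha\to B\beta)$; $B\alpha\to\neg B\neg\alpha$; $B\alpha\to BB\alpha$; necessitation for $B$. A maximal consistent set (MCS) is $\Gamma\subseteq\mathcal{L}_T$ with $\Gamma\nvdash\bot$ and, for each $\alpha$, $\alpha\in\Gamma$ or $\neg\alpha\in\Gamma$. For MCSs, $\Gamma\leftrightsquigarrow\Delta$ iff they contain the same formulas of the form $\chi\rightsquigarrow\psi$; $[\Gamma]_\leftrightsquigarrow$ is the equivalence class. $\rightsquigarrow_\varphi(\Gamma)=\{\psi:\varphi\rightsquigarrow\psi\in\Gamma\}$, and $\Delta$ is $\varphi$-likely for $\Gamma$ if $\rightsquigarrow_\varphi(\Gamma)\subseteq\Delta$. Let $S_\Gamma=[\Gamma]_\leftrightsquigarrow\times\mathcal{L}_{CL}\times\{0,1,2\}$ and $[\delta]_\Gamma=\{(\Delta,\varphi,i)\in S_\Gamma:\delta\in\Delta\}$. Define $\succeq_\Gamma\subseteq S_\Gamma\times S_\Gamma$ by: $(\Delta,\varphi,i)\succeq_\Gamma(\Omega,\psi,j)$ iff ($\Delta$ is $\varphi$-likely for $\Gamma$ and $\varphi\in\Omega$) or ($i=1,j=0$) or ($i=2,j=1$) or ($i=0,j=2$). For $X\subseteq S_\Gamma$, $\mathit{max}(X)=\{x\in X:\forall y\in X\,(y\succeq_\Gamma x\Rightarrow x\succeq_\Gamma y)\}$. *)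

theory Defs
  imports Main
begin

text \<open>A single formula type; classical propositional formulas (L_CL) and
  the trust language L_T are carved out by the predicates below, so that a
  propositional formula literally is an L_T formula (as in the paper's grammar).\<close>

datatype form =
    Var nat
  | Bot
  | Not form
  | And form form
  | Or form form
  | Imp form form
  | Iff form form
  | Cond form form   (* phi ~> psi *)
  | Bel form

fun is_prop :: "form \<Rightarrow> bool" where
  "is_prop (Var n) = True"
| "is_prop Bot = True"
| "is_prop (Not a) = is_prop a"
| "is_prop (And a b) = (is_prop a \<and> is_prop b)"
| "is_prop (Or a b) = (is_prop a \<and> is_prop b)"
| "is_prop (Imp a b) = (is_prop a \<and> is_prop b)"
| "is_prop (Iff a b) = (is_prop a \<and> is_prop b)"
| "is_prop (Cond a b) = False"
| "is_prop (Bel a) = False"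

fun in_LT :: "form \<Rightarrow> bool" where
  "in_LT (Var n) = True"
| "in_LT Bot = True"
| "in_LT (Not a) = in_LT a"
| "in_LT (And a b) = (in_LT a \<and> in_LT b)"
| "in_LT (Or a b) = (in_LT a \<and> in_LT b)"
| "in_LT (Imp a b) = (in_LT a \<and> in_LT b)"
| "in_LT (Iff a b) = (in_LT a \<and> in_LT b)"
| "in_LT (Cond a b) = (is_prop a \<and> is_prop b)"
| "in_LT (Bel a) = in_LT a"

definition Top :: form where "Top = Not Bot"

fun conj :: "form list \<Rightarrow> form" where
  "conj [] = Top"
| "conj [a] = a"
| "conj (a # as) = And a (conj as)"

text \<open>Subformulas of the form Var, Cond and Bel are treated as atoms.\<close>

fun teval :: "(form \<Rightarrow> bool) \<Rightarrow> form \<Rightarrow> bool" where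
  "teval v (Var n) = v (Var n)"
| "teval v Bot = False"
| "teval v (Not a) = (\<not> teval v a)"
| "teval v (And a b) = (teval v a \<and> teval v b)"
| "teval v (Or a b) = (teval v a \<or> teval v b)"
| "teval v (Imp a b) = (teval v a \<longrightarrow> teval v b)"
| "teval v (Iff a b) = (teval v a \<longleftrightarrow> teval v b)"
| "teval v (Cond a b) = v (Cond a b)"
| "teval v (Bel a) = v (Bel a)"

definition tautology :: "form \<Rightarrow> bool" where
  "tautology a \<longleftrightarrow> (\<forall>v. teval v a)"

definition is_literal :: "form \<Rightarrow> bool" where
  "is_literal l \<longleftrightarrow> (\<exists>a b. is_prop a \<and> is_prop b \<and> (l = Cond a b \<or> l = Not (Cond a b)))"

inductive sbthm :: "form \<Rightarrow> bool" where
  Taut: "in_LT a \<Longrightarrow> tautology a \<Longrightarrow> sbthm a"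
| MP: "sbthm a \<Longrightarrow> sbthm (Imp a b) \<Longrightarrow> sbthm b"
| Id: "is_prop p \<Longrightarrow> sbthm (Cond p p)"
| BotAx: "is_prop p \<Longrightarrow> sbthm (Imp (Cond p Bot) (Not p))"
| Exp: "is_prop p \<Longrightarrow> is_prop q \<Longrightarrow> is_prop c \<Longrightarrow>
        sbthm (Imp (Cond (And q c) p) (Cond q (Imp c p)))"
| Equiv: "is_prop p \<Longrightarrow> is_prop q \<Longrightarrow> is_prop c \<Longrightarrow>
        sbthm (Imp (Cond (Not (Iff p q)) Bot) (Iff (Cond p c) (Cond q c)))"
| RCK: "ps \<noteq> [] \<Longrightarrow> \<forall>p\<in>set ps. is_prop p \<Longrightarrow> is_prop p' \<Longrightarrow> is_prop q \<Longrightarrow>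
        sbthm (Imp (conj ps) p') \<Longrightarrow>
        sbthm (Imp (conj (map (Cond q) ps)) (Cond q p'))"
| S5F: "ls \<noteq> [] \<Longrightarrow> \<forall>l\<in>set ls. is_literal l \<Longrightarrow> is_prop c \<Longrightarrow>
        sbthm (Imp (conj ls) c) \<Longrightarrow>
        sbthm (Imp (conj ls) (Cond (Not c) Bot))"
| K: "in_LT a \<Longrightarrow> in_LT b \<Longrightarrow> sbthm (Imp (Bel (Imp a b)) (Imp (Bel a) (Bel b)))"
| D: "in_LT a \<Longrightarrow> sbthm (Imp (Bel a) (Not (Bel (Not a))))"
| Four: "in_LT a \<Longrightarrow> sbthm (Imp (Bel a) (Bel (Bel a)))"
| Nec: "sbthm a \<Longrightarrow> sbthm (Bel a)"

text \<open>Derivability from a set of premises: the premises are used only through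
  Modus Ponens (standard for systems with necessitation).\<close>

definition derives :: "form set \<Rightarrow> form \<Rightarrow> bool" where
  "derives G a \<longleftrightarrow> (\<exists>gs. set gs \<subseteq> G \<and> sbthm (Imp (conj gs) a))"

definition MCS :: "form set \<Rightarrow> bool" where
  "MCS G \<longleftrightarrow> G \<subseteq> {a. in_LT a} \<and> \<not> derives G Bot \<and>
     (\<forall>a. in_LT a \<longrightarrow> a \<in> G \<or> Not a \<in> G)"

definition cond_equiv_class :: "form set \<Rightarrow> form set set" where
  "cond_equiv_class G = {D. MCS D \<and> (\<forall>c p. Cond c p \<in> D \<longleftrightarrow> Cond c p \<in> G)}"

definition cond_of :: "form \<Rightarrow> form set \<Rightarrow> form set" where
  "cond_of p G = {q. Cond p q \<in> G}"

definition likely :: "form set \<Rightarrow> form \<Rightarrow> form set \<Rightarrow> bool" where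
  "likely G p D \<longleftrightarrow> cond_of p G \<subseteq> D"

definition S_of :: "form set \<Rightarrow> (form set \<times> form \<times> nat) set" where
  "S_of G = {(D, p, i). D \<in> cond_equiv_class G \<and> is_prop p \<and> i \<in> {0,1,2}}"

definition ext :: "form set \<Rightarrow> form \<Rightarrow> (form set \<times> form \<times> nat) set" where
  "ext G d = {(D, p, i) \<in> S_of G. d \<in> D}"

definition succeq :: "form set \<Rightarrow> form set \<times> form \<times> nat \<Rightarrow> form set \<times> form \<times> nat \<Rightarrow> bool" where
  "succeq G x y = (case x of (D, p, i) \<Rightarrow> case y of (Om, q, j) \<Rightarrow>
      (likely G p D \<and> p \<in> Om) \<or> (i = 1 \<and> j = 0) \<or> (i = 2 \<and> j = 1) \<or> (i = 0 \<and> j = 2))"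

definition maxel :: "form set \<Rightarrow> (form set \<times> form \<times> nat) set \<Rightarrow> (form set \<times> form \<times> nat) set" where
  "maxel G X = {x \<in> X. \<forall>y\<in>X. succeq G y x \<longrightarrow> succeq G x y}"

end

theory Submission
  imports Defs
begin

lemma prop_LT: "is_prop a \<Longrightarrow> in_LT a"
  by (induction a) auto

lemma teval_conj: "teval v (conj xs) = (\<forall>x\<in>set xs. teval v x)"
  by (induction xs rule: conj.induct) (auto simp: Top_def)

lemma LT_conj: "in_LT (conj xs) = (\<forall>x\<in>set xs. in_LT x)"
  by (induction xs rule: conj.induct) (auto simp: Top_def)

lemma prop_conj: "is_prop (conj xs) = (\<forall>x\<in>set xs. is_prop x)"
  by (induction xs rule: conj.induct) (auto simp: Top_def)

lemma literal_LT: "is_literal l \<Longrightarrow> in_LT l"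
  unfolding is_literal_def by auto

lemma sbthm_LT: "sbthm a \<Longrightarrow> in_LT a"
  by (induction rule: sbthm.induct)
     (auto simp: prop_LT LT_conj literal_LT)

lemma taut_mp: "sbthm a \<Longrightarrow> in_LT b \<Longrightarrow> (\<forall>v. teval v a \<longrightarrow> teval v b) \<Longrightarrow> sbthm b"
  by (metis MP Taut in_LT.simps(6) sbthm_LT tautology_def teval.simps(6))

lemma taut_mp2:
  assumes "sbthm a" "sbthm b" "in_LT c" "\<forall>v. teval v a \<longrightarrow> teval v b \<longrightarrow> teval v c"
  shows "sbthm c"
proof -
  have "sbthm (Imp a (Imp b c))"
    using assms sbthm_LT by (intro Taut) (auto simp: tautology_def)
  then show ?thesis using assms MP by blast
qed

lemma mcs_taut:
  assumes "MCS G" "set gs \<subseteq> G" "in_LT c" "\<forall>v. (\<forall>g\<in>set gs. teval v g) \<longrightarrow> teval v c"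
  shows "c \<in> G"
proof (rule ccontr)
  assume "c \<notin> G"
  then have "Not c \<in> G" using assms unfolding MCS_def by auto
  have "in_LT (Imp (conj (Not c # gs)) Bot)"
    using assms unfolding MCS_def by (auto simp: LT_conj)
  moreover have "tautology (Imp (conj (Not c # gs)) Bot)"
    using assms(4) unfolding tautology_def by (auto simp: teval_conj)
  ultimately have "sbthm (Imp (conj (Not c # gs)) Bot)" by (rule Taut)
  then have "derives G Bot" unfolding derives_def using \<open>Not c \<in> G\<close> assms(2)
    by (metis insert_subset list.simps(15))
  then show False using assms(1) unfolding MCS_def by auto
qed

lemma mcs_derives:
  assumes m: "MCS G" and d: "derives G a" and l: "in_LT a"
  shows "a \<in> G"
proof (rule ccontr)
  assume "a \<notin> G"
  then have na: "Not a \<in> G" using m l unfolding MCS_def by auto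
  obtain gs where gs: "set gs \<subseteq> G" "sbthm (Imp (conj gs) a)" using d unfolding derives_def by auto
  have "in_LT (conj gs)" using gs m unfolding MCS_def by (auto simp: LT_conj)
  then have "sbthm (Imp (conj (Not a # gs)) Bot)"
    using taut_mp[OF gs(2), of "Imp (conj (Not a # gs)) Bot"] l
    by (auto simp: teval_conj LT_conj)
  then have "derives G Bot" unfolding derives_def using na gs(1)
    by (metis insert_subset list.simps(15))
  then show False using m unfolding MCS_def by auto
qed

lemma mcs_thm: "MCS G \<Longrightarrow> sbthm a \<Longrightarrow> a \<in> G"
proof -
  assume m: "MCS G" and a: "sbthm a"
  have "sbthm (Imp (conj []) a)"
    using taut_mp[OF a, of "Imp Top a"] sbthm_LT[OF a] by (auto simp: Top_def)
  then have "derives G a" unfolding derives_def by (metis empty_set empty_subsetI)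
  then show "a \<in> G" using mcs_derives m sbthm_LT[OF a] by blast
qed

lemma mcs_mp: "MCS G \<Longrightarrow> a \<in> G \<Longrightarrow> Imp a b \<in> G \<Longrightarrow> b \<in> G"
  using mcs_taut[of G "[a, Imp a b]" b] unfolding MCS_def by auto

lemma mcs_not: "MCS G \<Longrightarrow> a \<in> G \<Longrightarrow> Not a \<in> G \<Longrightarrow> False"
proof -
  assume m: "MCS G" and h: "a \<in> G" "Not a \<in> G"
  have "in_LT a" using m h unfolding MCS_def by auto
  then have "sbthm (Imp (conj [a, Not a]) Bot)"
    by (intro Taut) (auto simp: tautology_def)
  then have "derives G Bot" unfolding derives_def using h
    by (metis empty_subsetI insert_subset list.set(1,2))
  then show False using m unfolding MCS_def by auto
qed


lemma deduct:
  assumes "set gs \<subseteq> insert a M" "sbthm (Imp (conj gs) b)" "in_LT a" "in_LT b" "M \<subseteq> {x. in_LT x}"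
  shows "\<exists>gs'. set gs' \<subseteq> M \<and> sbthm (Imp (conj gs') (Imp a b))"
proof (intro exI conjI)
  let ?g = "filter (\<lambda>x. x \<noteq> a) gs"
  show "set ?g \<subseteq> M" using assms(1) by auto
  then have "in_LT (conj ?g)" using assms(5) by (auto simp: LT_conj)
  then show "sbthm (Imp (conj ?g) (Imp a b))"
    using taut_mp[OF assms(2), of "Imp (conj ?g) (Imp a b)"] assms(3,4)
    by (auto simp: teval_conj)
qed

lemma chain_fin:
  assumes "C \<in> chains A" "C \<noteq> {}" "set gs \<subseteq> \<Union>C"
  shows "\<exists>X\<in>C. set gs \<subseteq> X"
  using assms(3)
proof (induction gs)
  case Nil then show ?case using assms(2) by auto
next
  case (Cons g gs)
  then obtain X where X: "X \<in> C" "set gs \<subseteq> X" by auto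
  obtain Y where Y: "Y \<in> C" "g \<in> Y" using Cons.prems by auto
  from chainsD[OF assms(1) X(1) Y(1)] show ?case using X Y by auto
qed

lemma lindenbaum:
  assumes "S \<subseteq> {x. in_LT x}" "\<not> derives S Bot"
  shows "\<exists>M. MCS M \<and> S \<subseteq> M"
proof -
  let ?A = "{M. S \<subseteq> M \<and> M \<subseteq> {x. in_LT x} \<and> \<not> derives M Bot}"
  have "\<forall>C\<in>chains ?A. \<exists>U\<in>?A. \<forall>X\<in>C. X \<subseteq> U"
  proof
    fix C assume C: "C \<in> chains ?A"
    show "\<exists>U\<in>?A. \<forall>X\<in>C. X \<subseteq> U"
    proof (cases "C = {}")
      case True then show ?thesis using assms by auto
    next
      case False
      have CA: "C \<subseteq> ?A" using chainsD2[OF C] .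
      have "\<not> derives (\<Union>C) Bot"
      proof
        assume "derives (\<Union>C) Bot"
        then obtain gs where gs: "set gs \<subseteq> \<Union>C" "sbthm (Imp (conj gs) Bot)"
          unfolding derives_def by auto
        obtain X where "X \<in> C" "set gs \<subseteq> X" using chain_fin[OF C False gs(1)] by auto
        then have "derives X Bot" using gs(2) unfolding derives_def by auto
        then show False using CA \<open>X \<in> C\<close> by auto
      qed
      then have "\<Union>C \<in> ?A" using CA False by auto
      then show ?thesis by blast
    qed
  qed
  from Zorn_Lemma2[OF this] obtain M where M: "M \<in> ?A" "\<forall>X\<in>?A. M \<subseteq> X \<longrightarrow> X = M" by blast
  have "MCS M" unfolding MCS_def
  proof (intro conjI allI impI)
    show "M \<subseteq> {x. in_LT x}" "\<not> derives M Bot" using M by auto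
  next
    fix a assume a: "in_LT a"
    show "a \<in> M \<or> Not a \<in> M"
    proof (rule ccontr)
      assume h: "\<not> (a \<in> M \<or> Not a \<in> M)"
      have d1: "derives (insert a M) Bot"
      proof (rule ccontr)
        assume "\<not> derives (insert a M) Bot"
        then have "insert a M \<in> ?A" using M a by auto
        then show False using M h by blast
      qed
      have d2: "derives (insert (Not a) M) Bot"
      proof (rule ccontr)
        assume "\<not> derives (insert (Not a) M) Bot"
        then have "insert (Not a) M \<in> ?A" using M a by auto
        then show False using M h by blast
      qed
      have HLT: "M \<subseteq> {x. in_LT x}" using M by auto
      obtain g1 where g1: "set g1 \<subseteq> M" "sbthm (Imp (conj g1) (Imp a Bot))"
        using d1 deduct[OF _ _ a _ HLT] unfolding derives_def by force
      obtain g2 where g2: "set g2 \<subseteq> M" "sbthm (Imp (conj g2) (Imp (Not a) Bot))"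
        using d2 deduct[OF _ _ _ _ HLT, of _ "Not a"] a unfolding derives_def by force
      have "in_LT (conj (g1 @ g2))" using g1 g2 HLT by (auto simp: LT_conj)
      then have "sbthm (Imp (conj (g1 @ g2)) Bot)"
        using taut_mp2[OF g1(2) g2(2), of "Imp (conj (g1 @ g2)) Bot"]
        by (auto simp: teval_conj)
      then have "derives M Bot" using g1 g2 unfolding derives_def
        by (metis le_sup_iff set_append)
      then show False using M by auto
    qed
  qed
  then show ?thesis using M by auto
qed


definition LG :: "form set \<Rightarrow> form set" where
  "LG G = {Cond a b | a b. Cond a b \<in> G} \<union> {Not (Cond a b) | a b. is_prop a \<and> is_prop b \<and> Cond a b \<notin> G}"

lemma Cond_prop: "MCS G \<Longrightarrow> Cond a b \<in> G \<Longrightarrow> is_prop a \<and> is_prop b"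
  unfolding MCS_def by auto

lemma LG_LT: "MCS G \<Longrightarrow> LG G \<subseteq> {x. in_LT x}"
  unfolding LG_def MCS_def by auto

lemma LG_G: "MCS G \<Longrightarrow> LG G \<subseteq> G"
  unfolding LG_def MCS_def by (auto, metis in_LT.simps(8))

lemma LG_lit: "MCS G \<Longrightarrow> x \<in> LG G \<Longrightarrow> is_literal x"
  unfolding LG_def is_literal_def MCS_def by auto

lemma LG_class: "MCS G \<Longrightarrow> MCS Om \<Longrightarrow> LG G \<subseteq> Om \<Longrightarrow> Om \<in> cond_equiv_class G"
  unfolding cond_equiv_class_def
proof (intro CollectI conjI allI)
  fix c p assume m: "MCS G" "MCS Om" "LG G \<subseteq> Om"
  show "(Cond c p \<in> Om) = (Cond c p \<in> G)"
  proof
    assume h: "Cond c p \<in> Om"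
    then have "is_prop c" "is_prop p" using Cond_prop m by auto
    show "Cond c p \<in> G"
    proof (rule ccontr)
      assume "Cond c p \<notin> G"
      then have "Not (Cond c p) \<in> Om" using m \<open>is_prop c\<close> \<open>is_prop p\<close> unfolding LG_def by auto
      then show False using mcs_not[OF m(2) h] by auto
    qed
  next
    assume "Cond c p \<in> G" then show "Cond c p \<in> Om" using m unfolding LG_def by auto
  qed
qed (auto)

lemma s5f_G:
  assumes m: "MCS G" and gs: "set gs \<subseteq> LG G \<union> {x. is_prop x}" "sbthm (Imp (conj gs) Bot)"
    and c: "is_prop c"
    and sem: "\<forall>v. (\<forall>x\<in>set gs. x \<in> LG G \<longrightarrow> teval v x) \<longrightarrow> \<not>(\<forall>x\<in>set gs. teval v x) \<longrightarrow> teval v c"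
  shows "Cond (Not c) Bot \<in> G"
proof -
  let ?ls = "Cond Top Top # filter (\<lambda>x. x \<in> LG G) gs"
  have tt: "Cond Top Top \<in> G" using mcs_thm[OF m] Id[of Top] by (auto simp: Top_def)
  then have lsG: "set ?ls \<subseteq> LG G" unfolding LG_def by auto
  have "in_LT (conj ?ls)" using lsG LG_LT[OF m] by (auto simp: LT_conj)
  then have "sbthm (Imp (conj ?ls) c)"
    using taut_mp[OF gs(2), of "Imp (conj ?ls) c"] sem prop_LT[OF c]
    by (auto simp: teval_conj)
  then have "sbthm (Imp (conj ?ls) (Cond (Not c) Bot))"
    using S5F[of ?ls c] c lsG LG_lit[OF m] by auto
  moreover have "conj ?ls \<in> G"
    using mcs_taut[OF m, of ?ls "conj ?ls"] lsG LG_G[OF m] \<open>in_LT (conj ?ls)\<close>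
    by (auto simp: teval_conj)
  ultimately show ?thesis using mcs_thm[OF m] mcs_mp[OF m] by blast
qed


lemma class_MCS: "D \<in> cond_equiv_class G \<Longrightarrow> MCS D"
  unfolding cond_equiv_class_def by auto

lemma dir1:
  assumes m: "MCS G" and d: "is_prop d" and q: "is_prop q" and c: "Cond d q \<in> G"
    and x: "(D, p, i) \<in> maxel G (ext G d)"
  shows "q \<in> D"
proof -
  have D: "D \<in> cond_equiv_class G" "is_prop p" "i \<in> {0,1,2}" "d \<in> D"
    using x unfolding maxel_def ext_def S_of_def by auto
  have mx: "\<forall>y\<in>ext G d. succeq G y (D, p, i) \<longrightarrow> succeq G (D, p, i) y"
    using x unfolding maxel_def by auto
  define j where "j = (if i = 0 then 1 else if i = 1 then 2 else (0::nat))"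
  have key: "likely G p Om \<and> p \<in> Om2" if "Om \<in> cond_equiv_class G" "d \<in> Om"
     "Om2 \<in> cond_equiv_class G" "d \<in> Om2" "Om = D" for Om Om2
  proof -
    have "(Om2, p, j) \<in> ext G d" using that D unfolding ext_def S_of_def j_def by auto
    moreover have "succeq G (Om2, p, j) (D, p, i)" using D(3) unfolding succeq_def j_def by auto
    ultimately have "succeq G (D, p, i) (Om2, p, j)" using mx by blast
    then have "likely G p D \<and> p \<in> Om2" using D(3) unfolding succeq_def j_def
      by (cases "i = 0"; cases "i = 1"; simp)
    then show ?thesis using that by simp
  qed
  have lik: "likely G p D" using key[of D D] D by auto
  have allp: "p \<in> Om" if "Om \<in> cond_equiv_class G" "d \<in> Om" for Om
    using key[of D Om] D that by auto
  let ?S = "LG G \<union> {d, Not p}"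
  have "derives ?S Bot"
  proof (rule ccontr)
    assume "\<not> derives ?S Bot"
    moreover have "?S \<subseteq> {x. in_LT x}" using LG_LT[OF m] d D(2) by (auto simp: prop_LT)
    ultimately obtain Om where Om: "MCS Om" "?S \<subseteq> Om" using lindenbaum by blast
    then have "Om \<in> cond_equiv_class G" using LG_class[OF m] by auto
    then have "p \<in> Om" using allp Om by auto
    then show False using mcs_not[OF Om(1)] Om by auto
  qed
  then obtain gs where gs: "set gs \<subseteq> ?S" "sbthm (Imp (conj gs) Bot)" unfolding derives_def by auto
  have "Cond (Not (Iff (And p d) d)) Bot \<in> G"
  proof (rule s5f_G[OF m _ gs(2)])
    show "set gs \<subseteq> LG G \<union> {x. is_prop x}" using gs(1) d D(2) by auto
    show "is_prop (Iff (And p d) d)" using d D(2) by auto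
    show "\<forall>v. (\<forall>x\<in>set gs. x \<in> LG G \<longrightarrow> teval v x) \<longrightarrow> \<not>(\<forall>x\<in>set gs. teval v x) \<longrightarrow> teval v (Iff (And p d) d)"
    proof (intro allI impI)
      fix v assume h1: "\<forall>x\<in>set gs. x \<in> LG G \<longrightarrow> teval v x" and h2: "\<not>(\<forall>x\<in>set gs. teval v x)"
      then obtain x where "x \<in> set gs" "\<not> teval v x" by auto
      then have "x \<notin> LG G" using h1 by blast
      then have "x = d \<or> x = Not p" using \<open>x \<in> set gs\<close> gs(1) by blast
      then show "teval v (Iff (And p d) d)" using \<open>\<not> teval v x\<close> by auto
    qed
  qed
  moreover have "Imp (Cond (Not (Iff (And p d) d)) Bot) (Iff (Cond (And p d) q) (Cond d q)) \<in> G"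
    using mcs_thm[OF m Equiv[of "And p d" d q]] d q D(2) by simp
  ultimately have "Iff (Cond (And p d) q) (Cond d q) \<in> G"
    by (rule mcs_mp[OF m])
  then have "Cond (And p d) q \<in> G"
    using mcs_taut[OF m, of "[Iff (Cond (And p d) q) (Cond d q), Cond d q]"] c d q D(2) by auto
  moreover have "Imp (Cond (And p d) q) (Cond p (Imp d q)) \<in> G"
    using mcs_thm[OF m Exp[of q p d]] d q D(2) by simp
  ultimately have "Cond p (Imp d q) \<in> G"
    by (rule mcs_mp[OF m])
  then have "Imp d q \<in> D" using lik unfolding likely_def cond_of_def by auto
  then show "q \<in> D" using mcs_mp[OF class_MCS[OF D(1)] D(4)] by auto
qed


lemma dir2:
  assumes m: "MCS G" and d: "is_prop d" and q: "is_prop q"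
    and h: "\<forall>(D, p, i) \<in> maxel G (ext G d). q \<in> D"
  shows "Cond d q \<in> G"
proof (rule ccontr)
  assume nc: "Cond d q \<notin> G"
  let ?S = "LG G \<union> {d, Not q} \<union> cond_of d G"
  have cprop: "is_prop b" if "b \<in> cond_of d G" for b
    using that Cond_prop[OF m] unfolding cond_of_def by auto
  have "derives ?S Bot"
  proof (rule ccontr)
    assume "\<not> derives ?S Bot"
    moreover have "?S \<subseteq> {x. in_LT x}" using LG_LT[OF m] d q cprop by (auto simp: prop_LT)
    ultimately obtain Om where Om: "MCS Om" "?S \<subseteq> Om" using lindenbaum by blast
    then have cl: "Om \<in> cond_equiv_class G" using LG_class[OF m] by auto
    have lik: "likely G d Om" using Om unfolding likely_def by auto
    have xe: "(Om, d, 0) \<in> ext G d" using cl d Om unfolding ext_def S_of_def by auto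
    have "(Om, d, 0) \<in> maxel G (ext G d)"
      unfolding maxel_def
    proof (intro CollectI conjI ballI impI xe)
      fix y assume "y \<in> ext G d"
      then obtain Om2 p2 j2 where "y = (Om2, p2, j2)" "d \<in> Om2"
        unfolding ext_def by auto
      then show "succeq G (Om, d, 0) y" using lik unfolding succeq_def by auto
    qed
    then have "q \<in> Om" using h by auto
    then show False using mcs_not[OF Om(1)] Om by auto
  qed
  then obtain gs where gs: "set gs \<subseteq> ?S" "sbthm (Imp (conj gs) Bot)" unfolding derives_def by auto
  define ps where "ps = filter (\<lambda>x. x \<in> cond_of d G) gs"
  have psp: "\<forall>x\<in>set ps. is_prop x" using cprop unfolding ps_def by auto
  define ch where "ch = Imp (conj (d # ps)) q"
  define e where "e = And d ch"
  have chp: "is_prop ch" unfolding ch_def using psp d q by (simp add: prop_conj)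
  have ep: "is_prop e" unfolding e_def using chp d by simp
  have "Cond (Not (Iff d e)) Bot \<in> G"
  proof (rule s5f_G[OF m _ gs(2)])
    show "set gs \<subseteq> LG G \<union> {x. is_prop x}" using gs(1) d q cprop by auto
    show "is_prop (Iff d e)" using d ep by auto
    show "\<forall>v. (\<forall>x\<in>set gs. x \<in> LG G \<longrightarrow> teval v x) \<longrightarrow> \<not>(\<forall>x\<in>set gs. teval v x) \<longrightarrow> teval v (Iff d e)"
    proof (intro allI impI)
      fix v assume h1: "\<forall>x\<in>set gs. x \<in> LG G \<longrightarrow> teval v x" and h2: "\<not>(\<forall>x\<in>set gs. teval v x)"
      show "teval v (Iff d e)"
      proof (rule ccontr)
        assume "\<not> teval v (Iff d e)"
        then have t: "teval v d" "\<forall>x\<in>set ps. teval v x" "\<not> teval v q"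
          unfolding e_def ch_def by (auto simp: teval_conj)
        have "\<forall>x\<in>set gs. teval v x"
        proof
          fix x assume xg: "x \<in> set gs"
          then have "x \<in> LG G \<or> x = d \<or> x = Not q \<or> x \<in> set ps" using gs(1) unfolding ps_def by auto
          then show "teval v x" using h1 t xg by auto
        qed
        then show False using h2 by blast
      qed
    qed
  qed
  then have iff: "Iff (Cond d b) (Cond e b) \<in> G" if "is_prop b" for b
    using mcs_mp[OF m _ mcs_thm[OF m Equiv[of d e b]]] d ep that by simp
  have condG: "Cond e b \<in> G" if "b \<in> set (e # ps)" for b
  proof (cases "b = e")
    case True then show ?thesis using mcs_thm[OF m Id[OF ep]] by simp
  next
    case False
    then have "Cond d b \<in> G" "is_prop b" using that psp unfolding ps_def cond_of_def by auto
    then show ?thesis using iff[of b] mcs_taut[OF m, of "[Iff (Cond d b) (Cond e b), Cond d b]" "Cond e b"]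
      ep by auto
  qed
  have "sbthm (Imp (conj (e # ps)) q)"
    by (rule Taut) (auto simp: tautology_def teval_conj LT_conj e_def ch_def prop_LT d q psp chp)
  then have "sbthm (Imp (conj (map (Cond e) (e # ps))) (Cond e q))"
    by (intro RCK) (auto simp: ep psp q)
  moreover have "conj (map (Cond e) (e # ps)) \<in> G"
    using mcs_taut[OF m, of "map (Cond e) (e # ps)" "conj (map (Cond e) (e # ps))"] condG
      ep psp by (auto simp: teval_conj LT_conj)
  ultimately have "Cond e q \<in> G" using mcs_mp[OF m _ mcs_thm[OF m]] by blast
  then have "Cond d q \<in> G"
    using iff[OF q] mcs_taut[OF m, of "[Iff (Cond d q) (Cond e q), Cond e q]" "Cond d q"] d q by auto
  then show False using nc by simp
qed

theorem corollary2:
  assumes "MCS G" and "is_prop d" and "is_prop q"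
  shows "Cond d q \<in> G \<longleftrightarrow> (\<forall>(D, p, i) \<in> maxel G (ext G d). q \<in> D)"
  using dir1[OF assms] dir2[OF assms] by blast

end
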